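(* Let $V=\mathbb{F}_2^s$ and let $\circ$ and $\diamond$ be two alternative operations on $V$ with $\dim W_\circ=\dim W_\diamond=s-3$. Then the groups $H_\circ$ and $H_\diamond$ are conjugate by some $g\in\mathrm{GL}(V)$ if and only if $\dim U_\circ=\dim U_\diamond$.
   Context: An alternative operation on $V$ is defined from an elementary abelian $2$-subgroup $T<\mathrm{AGL}(V,+)$ acting regularly on $V$: with $\tau_a$ the unique element of $T$ sending $0$ to $a$ (postfix notation), $a\circ b:=a\tau_b$. It is assumed that the xor-translations lie in $\mathrm{AGL}(V,\circ)$, the normaliser of $T$ in $\mathrm{Sym}(V)$; $\mathrm{GL}(V,\circ)$ is the stabiliser of $0$ in $\mathrm{AGL}(V,\circ)$ and $H_\circ:=\mathrm{GL}(V,+)\cap\mathrm{GL}(V,\circ)$. The weak key space is $W_\circ=\{k: x\circ k=x+k\ \forall x\}$; the product is $a\cdot b=a+b+a\circ b$ and the error space is $U_\circ=\{a\cdot b: a,b\in V\}$. Conjugation by $g$ means $G\mapsto gGg^{-1}$. *)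

theory Defs
  imports "HOL-Analysis.Analysis" "HOL-Library.Z2"
begin

text \<open>V = F_2^s is modelled as the type bit ^ 'n with s = CARD('n).
Maps are written as functions; composition of permutations is function composition.\<close>

type_synonym 'n V = "bit ^ 'n"

definition GLV :: "('n::finite V \<Rightarrow> 'n V) set" where
  "GLV = {f. Vector_Spaces.linear (*s) (*s) f \<and> bij f}"

definition AGLV :: "('n::finite V \<Rightarrow> 'n V) set" where
  "AGLV = {f. \<exists>A b. A \<in> GLV \<and> (\<forall>x. f x = A x + b)}"

definition xor_trans :: "'n::finite V \<Rightarrow> 'n V \<Rightarrow> 'n V" where
  "xor_trans a = (\<lambda>x. x + a)"

definition normaliser :: "('a \<Rightarrow> 'a) set \<Rightarrow> ('a \<Rightarrow> 'a) set" where
  "normaliser T = {g. bij g \<and> (\<lambda>t. g \<circ> t \<circ> inv g) ` T = T}"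

text \<open>T is an elementary abelian 2-subgroup of AGL(V,+) acting regularly on V,
 and the xor-translations lie in its normaliser AGL(V,o).\<close>
definition alt_group :: "('n::finite V \<Rightarrow> 'n V) set \<Rightarrow> bool" where
  "alt_group T \<longleftrightarrow>
     T \<subseteq> AGLV \<and> id \<in> T \<and>
     (\<forall>t\<in>T. \<forall>u\<in>T. t \<circ> u \<in> T) \<and>
     (\<forall>t\<in>T. \<forall>u\<in>T. t \<circ> u = u \<circ> t) \<and>
     (\<forall>t\<in>T. t \<circ> t = id) \<and>
     (\<forall>x y. \<exists>!t. t \<in> T \<and> t x = y) \<and>
     (\<forall>a. xor_trans a \<in> normaliser T)"

text \<open>tau_b: the unique element of T sending 0 to b;  a o b = a tau_b.\<close>
definition tau :: "('n::finite V \<Rightarrow> 'n V) set \<Rightarrow> 'n V \<Rightarrow> ('n V \<Rightarrow> 'n V)" where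
  "tau T b = (THE t. t \<in> T \<and> t 0 = b)"

definition alt_op :: "('n::finite V \<Rightarrow> 'n V) set \<Rightarrow> 'n V \<Rightarrow> 'n V \<Rightarrow> 'n V" where
  "alt_op T a b = tau T b a"

definition AGL_alt :: "('n::finite V \<Rightarrow> 'n V) set \<Rightarrow> ('n V \<Rightarrow> 'n V) set" where
  "AGL_alt T = normaliser T"

definition GL_alt :: "('n::finite V \<Rightarrow> 'n V) set \<Rightarrow> ('n V \<Rightarrow> 'n V) set" where
  "GL_alt T = {g \<in> AGL_alt T. g 0 = 0}"

definition H_alt :: "('n::finite V \<Rightarrow> 'n V) set \<Rightarrow> ('n V \<Rightarrow> 'n V) set" where
  "H_alt T = GLV \<inter> GL_alt T"

definition weak_keys :: "('n::finite V \<Rightarrow> 'n V) set \<Rightarrow> 'n V set" where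
  "weak_keys T = {k. \<forall>x. alt_op T x k = x + k}"

definition error_space :: "('n::finite V \<Rightarrow> 'n V) set \<Rightarrow> 'n V set" where
  "error_space T = {a + b + alt_op T a b | a b. True}"

definition conj_set :: "('a \<Rightarrow> 'a) \<Rightarrow> ('a \<Rightarrow> 'a) set \<Rightarrow> ('a \<Rightarrow> 'a) set" where
  "conj_set g G = (\<lambda>h. g \<circ> h \<circ> inv g) ` G"

end

theory Submission
  imports Defs
begin

lemma bit_add_self[simp]: "(a::bit) + a = 0"
  by (cases a) simp_all
lemma bit_add_self2[simp]: "(a::bit) + (a + b) = b"
  by (cases a; cases b) simp_all
lemma V_add_self[simp]: "(x::'n::finite V) + x = 0"
  by (simp add: vec_eq_iff)
lemma V_add_self2[simp]: "(x::'n::finite V) + (x + y) = y"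
  by (simp add: vec_eq_iff)
lemma V_uminus[simp]: "- (x::'n::finite V) = x"
  by (simp add: vec_eq_iff)
lemma V_minus[simp]: "(x::'n::finite V) - y = x + y"
  by (simp add: vec_eq_iff)

lemma lin_add: "Vector_Spaces.linear (*s) (*s) (f::'n::finite V \<Rightarrow> 'm::finite V) \<Longrightarrow> f (x + y) = f x + f y"
  by (simp add: Vector_Spaces.linear_iff)
lemma lin_scale: "Vector_Spaces.linear (*s) (*s) (f::'n::finite V \<Rightarrow> 'm::finite V) \<Longrightarrow> f (c *s x) = c *s f x"
  by (simp add: Vector_Spaces.linear_iff)
lemma lin_0: "Vector_Spaces.linear (*s) (*s) (f::'n::finite V \<Rightarrow> 'm::finite V) \<Longrightarrow> f 0 = 0"
  using lin_add[of f 0 0] by simp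

lemma scale_bit_cases: "(c::bit) *s (x::'n::finite V) = (if c = 0 then 0 else x)"
  by (cases c) (simp_all add: vec_eq_iff)

lemma bit_eq_iff_add: "((a::bit) = b) = (a + b = 0)"
  by (cases a; cases b) simp_all
lemma V_eq_iff: "((a::'n::finite V) = b) = (a + b = 0)"
proof -
  have "(a $ i = b $ i) = ((a + b) $ i = 0 $ i)" for i
    using bit_eq_iff_add[of "a $ i" "b $ i"] by simp
  then show ?thesis by (simp only: vec_eq_iff)
qed

lemma alt_groupD1: "alt_group T \<Longrightarrow> T \<subseteq> AGLV" unfolding alt_group_def by (elim conjE)
lemma alt_groupD2: "alt_group T \<Longrightarrow> \<forall>t\<in>T. \<forall>u\<in>T. t \<circ> u \<in> T" unfolding alt_group_def by (elim conjE)
lemma alt_groupD3: "alt_group T \<Longrightarrow> \<forall>t\<in>T. \<forall>u\<in>T. t \<circ> u = u \<circ> t" unfolding alt_group_def by (elim conjE)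
lemma alt_groupD4: "alt_group T \<Longrightarrow> \<forall>t\<in>T. t \<circ> t = id" unfolding alt_group_def by (elim conjE)
lemma alt_groupD5: "alt_group T \<Longrightarrow> \<forall>x y. \<exists>!t. t \<in> T \<and> t x = y" unfolding alt_group_def by (elim conjE)
lemma alt_groupD6: "alt_group T \<Longrightarrow> \<forall>a. xor_trans a \<in> normaliser T" unfolding alt_group_def by (elim conjE)
lemmas alt_groupD = alt_groupD1 alt_groupD2 alt_groupD3 alt_groupD4 alt_groupD5 alt_groupD6

definition Bf :: "('n::finite V \<Rightarrow> 'n V) set \<Rightarrow> 'n V \<Rightarrow> 'n V \<Rightarrow> 'n V" where
  "Bf T x a = x + a + alt_op T x a"

lemma tau_props:
  assumes "alt_group T" shows "tau T b \<in> T" "tau T b 0 = b"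
proof -
  from alt_groupD(5)[OF assms] have "\<exists>!t. t \<in> T \<and> t 0 = b" by blast
  then have "tau T b \<in> T \<and> tau T b 0 = b" unfolding tau_def by (rule theI')
  then show "tau T b \<in> T" "tau T b 0 = b" by auto
qed

lemma tau_uniq:
  assumes "alt_group T" "t \<in> T" "t 0 = b" shows "tau T b = t"
proof -
  from alt_groupD(5)[OF assms(1)] have "\<exists>!t. t \<in> T \<and> t 0 = b" by blast
  then show ?thesis unfolding tau_def by (rule the1_equality) (use assms(2,3) in simp)
qed

lemma T_affine:
  assumes "alt_group T" "t \<in> T" shows "t (x + y) = t x + t y + t 0"
proof -
  from alt_groupD(1)[OF assms(1)] assms(2) have "t \<in> AGLV" by blast
  then obtain A b where A: "A \<in> GLV" "\<And>x. t x = A x + b" unfolding AGLV_def by blast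
  then have lin: "Vector_Spaces.linear (*s) (*s) A" unfolding GLV_def by blast
  show ?thesis using lin_add[OF lin, of x y] lin_0[OF lin] by (simp add: A add_ac)
qed

lemma Bf_alt: "Bf T x a = x + a + tau T a x"
  by (simp add: Bf_def alt_op_def)

lemma Bf_add1:
  assumes "alt_group T" shows "Bf T (x + y) a = Bf T x a + Bf T y a"
  using T_affine[OF assms tau_props(1)[OF assms], of a x y] tau_props(2)[OF assms, of a]
  by (simp add: Bf_alt add_ac)

lemma Bf_sym:
  assumes "alt_group T" shows "Bf T x a = Bf T a x"
proof -
  have c: "tau T a \<circ> tau T x = tau T x \<circ> tau T a"
    using alt_groupD(3)[OF assms] tau_props(1)[OF assms] by blast
  have "tau T a x = tau T x a"
    using fun_cong[OF c, of 0] tau_props(2)[OF assms] by simp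
  then show ?thesis by (simp add: Bf_alt add_ac)
qed

lemma Bf_self:
  assumes "alt_group T" shows "Bf T a a = 0"
proof -
  have c: "tau T a \<circ> tau T a = id"
    using alt_groupD(4)[OF assms] tau_props(1)[OF assms] by blast
  have "tau T a a = 0"
    using fun_cong[OF c, of 0] tau_props(2)[OF assms] by simp
  then show ?thesis by (simp add: Bf_alt)
qed

lemma xor_trans_inv: "inv (xor_trans c) = xor_trans (c::'n::finite V)"
  by (rule inv_unique_comp) (simp_all add: fun_eq_iff xor_trans_def add.assoc)

lemma Bf_W:
  assumes "alt_group T" shows "Bf T x (Bf T c a) = 0"
proof -
  let ?t = "tau T a" and ?s = "xor_trans c"
  have t: "?t \<in> T" "?t 0 = a" using tau_props[OF assms] by auto
  have "?s \<in> normaliser T" using alt_groupD(6)[OF assms] by blast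
  then have "(\<lambda>t. ?s \<circ> t \<circ> inv ?s) ` T = T" unfolding normaliser_def by blast
  moreover have "?s \<circ> ?t \<circ> inv ?s \<in> (\<lambda>t. ?s \<circ> t \<circ> inv ?s) ` T" by (rule imageI[OF t(1)])
  ultimately have p: "?s \<circ> ?t \<circ> ?s \<in> T" by (simp only: xor_trans_inv)
  then have q: "(?s \<circ> ?t \<circ> ?s) \<circ> ?t \<in> T" using alt_groupD(2)[OF assms] t(1) by blast
  have inv2: "?t (?t x) = x" for x
  proof -
    have "?t \<circ> ?t = id" using alt_groupD(4)[OF assms] t(1) by blast
    from fun_cong[OF this, of x] show ?thesis by simp
  qed
  have qx: "((?s \<circ> ?t \<circ> ?s) \<circ> ?t) x = x + Bf T c a" for x
    using T_affine[OF assms t(1), of "?t x" c] inv2[of x] t(2)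
    by (simp add: xor_trans_def Bf_alt add_ac)
  have e: "tau T (Bf T c a) = (?s \<circ> ?t \<circ> ?s) \<circ> ?t"
    by (rule tau_uniq[OF assms q]) (simp only: qx add_0_left)
  have "tau T (Bf T c a) x = x + Bf T c a" by (simp only: e qx)
  then show ?thesis by (simp add: Bf_alt)
qed

lemma weak_keys_eq: "weak_keys T = {k. \<forall>x. Bf T x k = 0}"
proof -
  have "alt_op T x k = x + k \<longleftrightarrow> Bf T x k = 0" for x k
    by (subst V_eq_iff) (simp add: Bf_def add_ac)
  then show ?thesis unfolding weak_keys_def by blast
qed

lemma error_space_eq: "error_space T = {Bf T a b | a b. True}"
  unfolding error_space_def Bf_def by blast

definition Hs :: "('n::finite V \<Rightarrow> 'n V \<Rightarrow> 'n V) \<Rightarrow> ('n V \<Rightarrow> 'n V) set" where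
  "Hs B = {g \<in> GLV. \<forall>x y. g (B x y) = B (g x) (g y)}"

lemma GLV_D:
  assumes "g \<in> GLV"
  shows "Vector_Spaces.linear (*s) (*s) g" "bij g" "g 0 = 0" "\<And>y. g (inv g y) = y" "\<And>x. inv g (g x) = x"
    "inv g 0 = 0"
proof -
  show l: "Vector_Spaces.linear (*s) (*s) g" and b: "bij g" using assms unfolding GLV_def by auto
  show "g 0 = 0" using lin_0[OF l] .
  show "\<And>y. g (inv g y) = y" using b by (simp add: bij_is_surj surj_f_inv_f)
  show "\<And>x. inv g (g x) = x" using b by (simp add: bij_is_inj)
  then show "inv g 0 = 0" using \<open>g 0 = 0\<close> by metis
qed

lemma tau_conj:
  assumes T: "alt_group T" and g: "g \<in> GLV" and c: "\<forall>x y. g (Bf T x y) = Bf T (g x) (g y)"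
  shows "g \<circ> tau T a \<circ> inv g = tau T (g a)"
proof
  fix y
  have "g (tau T a x) = tau T (g a) (g x)" for x
    using c[rule_format, of x a] lin_add[OF GLV_D(1)[OF g]]
    by (simp add: Bf_alt add.assoc)
  from this[of "inv g y"] show "(g \<circ> tau T a \<circ> inv g) y = tau T (g a) y"
    by (simp add: GLV_D[OF g])
qed

lemma H_alt_eq:
  assumes T: "alt_group T" shows "H_alt T = Hs (Bf T)"
proof
  show "H_alt T \<subseteq> Hs (Bf T)"
  proof
    fix g assume "g \<in> H_alt T"
    then have g: "g \<in> GLV" and n: "(\<lambda>t. g \<circ> t \<circ> inv g) ` T = T"
      unfolding H_alt_def GL_alt_def AGL_alt_def normaliser_def by auto
    have "g (Bf T x a) = Bf T (g x) (g a)" for x a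
    proof -
      have "g \<circ> tau T a \<circ> inv g \<in> T" using n tau_props(1)[OF T] by blast
      moreover have "(g \<circ> tau T a \<circ> inv g) 0 = g a" using tau_props(2)[OF T] GLV_D[OF g] by simp
      ultimately have e: "tau T (g a) = g \<circ> tau T a \<circ> inv g" using tau_uniq[OF T] by blast
      have "tau T (g a) (g x) = g (tau T a x)" by (simp add: e GLV_D[OF g])
      then show ?thesis using lin_add[OF GLV_D(1)[OF g]] by (simp add: Bf_alt)
    qed
    then show "g \<in> Hs (Bf T)" unfolding Hs_def using g by blast
  qed
next
  show "Hs (Bf T) \<subseteq> H_alt T"
  proof
    fix g assume "g \<in> Hs (Bf T)"
    then have g: "g \<in> GLV" and c: "\<forall>x y. g (Bf T x y) = Bf T (g x) (g y)" unfolding Hs_def by auto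
    have "(\<lambda>t. g \<circ> t \<circ> inv g) ` T = T"
    proof
      show "(\<lambda>t. g \<circ> t \<circ> inv g) ` T \<subseteq> T"
      proof
        fix s assume "s \<in> (\<lambda>t. g \<circ> t \<circ> inv g) ` T"
        then obtain t where t: "t \<in> T" "s = g \<circ> t \<circ> inv g" by blast
        then have "t = tau T (t 0)" using tau_uniq[OF T t(1)] by simp
        then have "s = tau T (g (t 0))" using tau_conj[OF T g c, of "t 0"] t(2) by simp
        then show "s \<in> T" using tau_props(1)[OF T] by simp
      qed
    next
      show "T \<subseteq> (\<lambda>t. g \<circ> t \<circ> inv g) ` T"
      proof
        fix s assume s: "s \<in> T"
        then have "s = tau T (s 0)" using tau_uniq[OF T s] by simp
        also have "\<dots> = g \<circ> tau T (inv g (s 0)) \<circ> inv g"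
          using tau_conj[OF T g c, of "inv g (s 0)"] GLV_D(4)[OF g] by simp
        finally show "s \<in> (\<lambda>t. g \<circ> t \<circ> inv g) ` T" using tau_props(1)[OF T] by blast
      qed
    qed
    then show "g \<in> H_alt T" using g GLV_D[OF g]
      unfolding H_alt_def GL_alt_def AGL_alt_def normaliser_def by auto
  qed
qed

definition sstruct :: "('n::finite V \<Rightarrow> 'n V \<Rightarrow> 'n V) \<Rightarrow> 'n V set \<Rightarrow> bool" where
  "sstruct B W \<longleftrightarrow> (\<forall>x y z. B (x + y) z = B x z + B y z) \<and> (\<forall>x y. B x y = B y x) \<and>
     (\<forall>x. B x x = 0) \<and> W = {k. \<forall>x. B x k = 0} \<and> (\<forall>x y. B x y \<in> W) \<and> vec.dim W + 3 = CARD('n)"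

definition cb :: "'n::finite V set \<Rightarrow> 'n V \<Rightarrow> 'n V \<Rightarrow> 'n V \<Rightarrow> bool" where
  "cb W e1 e2 e3 \<longleftrightarrow> vec.span (insert e1 (insert e2 (insert e3 W))) = UNIV"

definition Urange :: "('n::finite V \<Rightarrow> 'n V \<Rightarrow> 'n V) \<Rightarrow> 'n V set" where
  "Urange B = {B a b | a b. True}"

lemma sstructD1: "sstruct B W \<Longrightarrow> \<forall>x y z. B (x + y) z = B x z + B y z" unfolding sstruct_def by (elim conjE)
lemma sstructD2: "sstruct B W \<Longrightarrow> \<forall>x y. B x y = B y x" unfolding sstruct_def by (elim conjE)
lemma sstructD3: "sstruct B W \<Longrightarrow> \<forall>x. B x x = 0" unfolding sstruct_def by (elim conjE)
lemma sstructD4: "sstruct B W \<Longrightarrow> W = {k. \<forall>x. B x k = 0}" unfolding sstruct_def by (elim conjE)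
lemma sstructD5: "sstruct B W \<Longrightarrow> \<forall>x y. B x y \<in> W" unfolding sstruct_def by (elim conjE)
lemma sstructD6: "sstruct (B::'n::finite V \<Rightarrow> _) W \<Longrightarrow> vec.dim W + 3 = CARD('n)" unfolding sstruct_def by (elim conjE)

context fixes B :: "'n::finite V \<Rightarrow> 'n V \<Rightarrow> 'n V" and W assumes S: "sstruct B W"
begin

lemma ss_add1: "B (x + y) z = B x z + B y z" using sstructD1[OF S] by simp
lemma ss_sym: "B x y = B y x" using sstructD2[OF S] by simp
lemma ss_self: "B x x = 0" using sstructD3[OF S] by simp
lemma ss_W: "W = {k. \<forall>x. B x k = 0}" using sstructD4[OF S] .
lemma ss_in: "B x y \<in> W" using sstructD5[OF S] by simp
lemma ss_dim: "vec.dim W + 3 = CARD('n)" using sstructD6[OF S] .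
lemma ss_add2: "B z (x + y) = B z x + B z y" by (simp only: ss_sym[of z] ss_add1)
lemma ss_01: "B 0 y = 0" using ss_add1[of 0 0 y] by simp
lemma ss_02: "B y 0 = 0" by (simp only: ss_sym[of y] ss_01)
lemma ss_scale1: "B (c *s x) y = c *s B x y" by (simp add: scale_bit_cases ss_01)
lemma ss_scale2: "B y (c *s x) = c *s B y x" by (simp add: scale_bit_cases ss_02)
lemma ss_Wr: "w \<in> W \<Longrightarrow> B x w = 0" using ss_W by blast
lemma ss_Wl: "w \<in> W \<Longrightarrow> B w x = 0" using ss_Wr[of w x] by (simp only: ss_sym[of w])
lemma ss_sub: "vec.subspace W"
  unfolding vec.subspace_def
proof (intro conjI ballI allI)
  show "0 \<in> W" by (subst ss_W) (simp add: ss_02)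
  show "x + y \<in> W" if "x \<in> W" "y \<in> W" for x y
    by (subst ss_W) (simp add: ss_add2 ss_Wr that)
  show "c *s x \<in> W" if "x \<in> W" for c x
    by (subst ss_W) (simp add: ss_scale2 ss_Wr that)
qed

lemma expand:
  assumes "w \<in> W" "w' \<in> W"
  shows "B (a1 *s e1 + a2 *s e2 + a3 *s e3 + w) (b1 *s e1 + b2 *s e2 + b3 *s e3 + w') =
    (a1*b2+a2*b1) *s B e1 e2 + (a1*b3+a3*b1) *s B e1 e3 + (a2*b3+a3*b2) *s B e2 e3"
proof -
  have s: "B e2 e1 = B e1 e2" "B e3 e1 = B e1 e3" "B e3 e2 = B e2 e3" using ss_sym by auto
  show ?thesis
    by (simp add: ss_add1 ss_add2 ss_scale1 ss_scale2 ss_Wl ss_Wr assms ss_self s)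
       (simp add: vec_eq_iff algebra_simps)
qed

end

lemma dimV: "vec.dim (UNIV :: 'n::finite V set) = CARD('n)"
  by (simp add: vec.dim_UNIV card_cart_basis)

lemma full_iff: "vec.dim (S :: 'n::finite V set) = CARD('n) \<longleftrightarrow> vec.span S = UNIV"
  using vec.dim_eq_full[of S] by (simp add: vec.dimension_def card_cart_basis)

lemma exists_out: "vec.dim (S :: 'n::finite V set) < CARD('n) \<Longrightarrow> \<exists>e. e \<notin> vec.span S"
  using full_iff[of S] by auto

lemma dim_ins: "(e::'n::finite V) \<notin> vec.span S \<Longrightarrow> vec.dim (insert e S) = vec.dim S + 1"
  by (simp add: vec.dim_insert)

lemma dim_ins_le: "vec.dim (insert (e::'n::finite V) S) \<le> vec.dim S + 1"
  by (simp add: vec.dim_insert)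

lemma K3:
  assumes W: "vec.subspace W" "vec.dim W + 3 = CARD('n)"
    and sp: "vec.span (insert x (insert y (insert z W))) = (UNIV :: 'n::finite V set)"
    and x: "x \<in> vec.span (insert y (insert z W))"
  shows False
proof -
  have "vec.span (insert y (insert z W)) = UNIV" using sp vec.span_redundant[OF x] by simp
  then have "vec.dim (insert y (insert z W)) = CARD('n)" using full_iff by blast
  moreover have "vec.dim (insert y (insert z W)) \<le> vec.dim W + 2"
    using dim_ins_le[of y "insert z W"] dim_ins_le[of z W] by simp
  ultimately show False using W(2) by simp
qed

lemma indep_mod:
  assumes W: "vec.subspace W" "vec.dim W + 3 = CARD('n)" and c: "cb W e1 e2 e3"
    and v: "a1 *s e1 + a2 *s e2 + a3 *s (e3::'n::finite V) \<in> W"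
  shows "a1 = 0 \<and> a2 = 0 \<and> a3 = 0"
proof -
  let ?v = "a1 *s e1 + a2 *s e2 + a3 *s e3"
  have sW: "vec.span W = W" using W(1) by simp
  have inW: "?v \<in> vec.span X" if "W \<subseteq> X" for X
    using v that vec.span_mono[OF that] sW by blast
  have b: "u \<in> vec.span X" if "u \<in> X" for u X using vec.span_base[OF that] .
  have sc: "c *s u \<in> vec.span X" if "u \<in> X" for u X c using vec.span_scale[OF b[OF that]] .
  have sp: "vec.span (insert e1 (insert e2 (insert e3 W))) = UNIV" using c unfolding cb_def .
  have "a1 = 0"
  proof (rule ccontr)
    assume "a1 \<noteq> 0" then have "a1 = 1" by simp
    then have "e1 = ?v + a2 *s e2 + a3 *s e3" by (simp add: add_ac)
    also have "\<dots> \<in> vec.span (insert e2 (insert e3 W))"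
      by (intro vec.span_add inW sc) auto
    finally show False using K3[OF W sp] by blast
  qed
  moreover have "a2 = 0"
  proof (rule ccontr)
    assume "a2 \<noteq> 0" then have "a2 = 1" by simp
    then have "e2 = ?v + a1 *s e1 + a3 *s e3" by (simp add: add_ac)
    also have "\<dots> \<in> vec.span (insert e1 (insert e3 W))"
      by (intro vec.span_add inW sc) auto
    finally show False using K3[OF W, of e2 e1 e3] sp by (metis insert_commute)
  qed
  moreover have "a3 = 0"
  proof (rule ccontr)
    assume "a3 \<noteq> 0" then have "a3 = 1" by simp
    then have "e3 = ?v + a1 *s e1 + a2 *s e2" by (simp add: add_ac)
    also have "\<dots> \<in> vec.span (insert e1 (insert e2 W))"
      by (intro vec.span_add inW sc) auto
    finally show False using K3[OF W, of e3 e1 e2] sp by (metis insert_commute)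
  qed
  ultimately show ?thesis by simp
qed

lemma coords:
  assumes W: "vec.subspace W" and c: "cb W e1 e2 e3"
  shows "\<exists>a1 a2 a3 w. w \<in> W \<and> (x::'n::finite V) = a1 *s e1 + a2 *s e2 + a3 *s e3 + w"
proof -
  have "x \<in> vec.span (insert e1 (insert e2 (insert e3 W)))" using c unfolding cb_def by simp
  then obtain k1 where "x + k1 *s e1 \<in> vec.span (insert e2 (insert e3 W))"
    unfolding vec.span_insert[of e1] by auto
  then obtain k2 where "x + k1 *s e1 + k2 *s e2 \<in> vec.span (insert e3 W)"
    unfolding vec.span_insert[of e2] by auto
  moreover have sW: "vec.span W = W" using W by simp
  ultimately obtain k3 where k: "x + k1 *s e1 + k2 *s e2 + k3 *s e3 \<in> W"
    unfolding vec.span_insert[of e3] by auto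
  show ?thesis
    by (rule exI[of _ k1], rule exI[of _ k2], rule exI[of _ k3], rule exI[of _ "x + k1 *s e1 + k2 *s e2 + k3 *s e3"])
       (use k in \<open>simp add: add_ac\<close>)
qed

lemma V_neq: "(a::'n::finite V) \<noteq> b \<Longrightarrow> a + b \<noteq> 0"
  using V_eq_iff[of a b] by simp

lemma complete2:
  assumes W: "vec.subspace W" "vec.dim W + 3 = CARD('n)"
    and x: "x \<notin> W" and y: "y \<notin> vec.span (insert x W)"
  shows "\<exists>z. cb W x y (z::'n::finite V)"
proof -
  have sW: "vec.span W = W" using W(1) by simp
  have d1: "vec.dim (insert x W) = vec.dim W + 1" using dim_ins[of x W] x sW by simp
  have d2: "vec.dim (insert y (insert x W)) = vec.dim W + 2" using dim_ins[OF y] d1 by simp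
  then have "vec.dim (insert y (insert x W)) < CARD('n)" using W(2) by simp
  then obtain z where z: "z \<notin> vec.span (insert y (insert x W))" using exists_out by blast
  have "vec.dim (insert z (insert y (insert x W))) = CARD('n)" using dim_ins[OF z] d2 W(2) by simp
  then have "vec.span (insert z (insert y (insert x W))) = UNIV" using full_iff by blast
  then have "cb W x y z" unfolding cb_def by (metis insert_commute)
  then show ?thesis by blast
qed

lemma complete1:
  assumes W: "vec.subspace W" "vec.dim W + 3 = CARD('n)" and x: "x \<notin> W"
  shows "\<exists>y z. cb W x y (z::'n::finite V)"
proof -
  have sW: "vec.span W = W" using W(1) by simp
  have d1: "vec.dim (insert x W) = vec.dim W + 1" using dim_ins[of x W] x sW by simp
  then have "vec.dim (insert x W) < CARD('n)" using W(2) by simp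
  then obtain y where "y \<notin> vec.span (insert x W)" using exists_out by blast
  then show ?thesis using complete2[OF W x] by blast
qed

lemma exists_cb:
  assumes W: "vec.subspace W" "vec.dim W + 3 = CARD('n)"
  shows "\<exists>x y z. cb W x y (z::'n::finite V)"
proof -
  have "vec.dim W < CARD('n)" using W(2) by simp
  then obtain x where "x \<notin> vec.span W" using exists_out by blast
  moreover have "vec.span W = W" using W(1) by simp
  ultimately have "x \<notin> W" by simp
  then show ?thesis using complete1[OF W] by blast
qed

lemma pair_indep:
  assumes "vec.independent {p, q}" "p \<noteq> q" "c *s p + d *s (q::'n::finite V) = 0"
  shows "c = 0 \<and> d = 0"
proof -
  have "0 \<notin> {p, q}" using assms(1) vec.dependent_zero[of "{p, q}"] by blast
  then have p0: "p \<noteq> 0" and q0: "q \<noteq> 0" by auto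
  show ?thesis
  proof (cases c; cases d)
    assume "c = 1" "d = 1" then have "p = q" using assms(3) by (simp add: V_eq_iff[of p q])
    then show ?thesis using assms(2) by simp
  qed (use assms(3) p0 q0 in auto)
qed

lemma triple_indep:
  assumes "vec.independent {p, q, r}" "p \<noteq> q" "p \<noteq> r" "q \<noteq> r"
    and "c *s p + d *s q + e *s (r::'n::finite V) = 0"
  shows "c = 0 \<and> d = 0 \<and> e = 0"
proof -
  have "0 \<notin> {p, q, r}" using assms(1) vec.dependent_zero[of "{p, q, r}"] by blast
  then have p0: "p \<noteq> 0" and q0: "q \<noteq> 0" and r0: "r \<noteq> 0" by auto
  have nr: "r \<notin> vec.span {p, q}"
  proof
    assume "r \<in> vec.span {p, q}"
    moreover have "{p, q, r} - {r} = {p, q}" using assms(3,4) by auto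
    ultimately have "r \<in> vec.span ({p, q, r} - {r})" by simp
    then have "vec.dependent {p, q, r}" unfolding vec.dependent_def by blast
    then show False using assms(1) by blast
  qed
  have pq: "p + q \<in> vec.span {p, q}" by (intro vec.span_add vec.span_base) auto
  have k1: "p + q \<noteq> 0" using assms(2) V_neq by blast
  have k2: "p + r \<noteq> 0" using assms(3) V_neq by blast
  have k3: "q + r \<noteq> 0" using assms(4) V_neq by blast
  have k4: "p + q + r \<noteq> 0"
  proof
    assume "p + q + r = 0"
    then have "r + (p + q) = 0" by (simp add: add_ac)
    then have "r = p + q" by (simp only: V_eq_iff[of r "p + q"])
    then show False using nr pq by simp
  qed
  show ?thesis using assms(5) p0 q0 r0 k1 k2 k3 k4
    by (cases c; cases d; cases e) (simp_all add: add_ac)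
qed

lemma span_U:
  assumes S: "sstruct B W" and c: "cb W e1 e2 e3"
  shows "vec.span (Urange B) = vec.span {B e1 e2, B e1 e3, B e2 e3}"
proof
  have sub: "vec.subspace W" using ss_sub[OF S] .
  let ?U = "{B e1 e2, B e1 e3, B e2 e3}"
  have "Urange B \<subseteq> vec.span ?U"
  proof
    fix v assume "v \<in> Urange B"
    then obtain x y where v: "v = B x y" unfolding Urange_def by blast
    obtain a1 a2 a3 w where x: "w \<in> W" "x = a1 *s e1 + a2 *s e2 + a3 *s e3 + w"
      using coords[OF sub c] by blast
    obtain b1 b2 b3 w' where y: "w' \<in> W" "y = b1 *s e1 + b2 *s e2 + b3 *s e3 + w'"
      using coords[OF sub c] by blast
    have "v = (a1*b2+a2*b1) *s B e1 e2 + (a1*b3+a3*b1) *s B e1 e3 + (a2*b3+a3*b2) *s B e2 e3"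
      using v x y expand[OF S x(1) y(1)] by simp
    also have "\<dots> \<in> vec.span ?U"
      by (intro vec.span_add vec.span_scale vec.span_base) auto
    finally show "v \<in> vec.span ?U" .
  qed
  then show "vec.span (Urange B) \<subseteq> vec.span ?U"
    using vec.span_mono vec.span_span by metis
  have "?U \<subseteq> Urange B" unfolding Urange_def by blast
  then show "vec.span ?U \<subseteq> vec.span (Urange B)" using vec.span_mono by blast
qed

lemma dim_U:
  assumes S: "sstruct B W" and c: "cb W e1 e2 e3"
  shows "vec.dim (Urange B) = vec.dim {B e1 e2, B e1 e3, B e2 e3}"
  using span_U[OF S c] by (metis vec.dim_span)

lemma card3: "card {a, b, c} \<le> 3"
  by (auto simp: card_insert_if)

lemma rank_le3:
  assumes S: "sstruct B W" shows "vec.dim (Urange (B::'n::finite V \<Rightarrow> _)) \<le> 3"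
proof -
  obtain e1 e2 e3 where c: "cb W e1 e2 e3" using exists_cb[OF ss_sub[OF S] ss_dim[OF S]] by blast
  have "vec.dim {B e1 e2, B e1 e3, B e2 e3} \<le> card {B e1 e2, B e1 e3, B e2 e3}"
    by (rule vec.dim_le_card) (auto intro: vec.span_base)
  then show ?thesis using dim_U[OF S c] card3 by (metis le_trans)
qed

lemma bit_cross0:
  "((c23::bit)*b2 + c13*b1)*c12 + (c23*b3 + c12*b1)*c13 + (c13*b3 + c12*b2)*c23 = 0"
  by (cases c23; cases b2; cases c13; cases b1; cases c12; cases b3) simp_all

lemma scale3: "a *s (c *s u) + b *s (d *s u) + e *s (f *s (u::'n::finite V)) = (a*c + b*d + e*f) *s u"
  by (simp add: vec.scale_left_distrib)

lemma card_le1_sub: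
  assumes "finite A" "card A \<le> 1" shows "\<exists>u. A \<subseteq> {u}"
proof (cases "A = {}")
  case True then show ?thesis by blast
next
  case False
  then obtain a where a: "a \<in> A" by blast
  have "\<forall>x\<in>A. \<forall>y\<in>A. x = y" using card_le_Suc0_iff_eq[OF assms(1)] assms(2) by simp
  then have "A \<subseteq> {a}" using a by blast
  then show ?thesis by blast
qed

lemma rank_ge2:
  assumes S: "sstruct B W" shows "2 \<le> vec.dim (Urange (B::'n::finite V \<Rightarrow> _))"
proof (rule ccontr)
  assume "\<not> 2 \<le> vec.dim (Urange B)"
  then have lt: "vec.dim (Urange B) \<le> 1" by simp
  have sub: "vec.subspace W" and dW: "vec.dim W + 3 = CARD('n)" using ss_sub[OF S] ss_dim[OF S] .
  obtain e1 e2 e3 where c: "cb W e1 e2 e3" using exists_cb[OF sub dW] by blast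
  let ?U = "{B e1 e2, B e1 e3, B e2 e3}"
  obtain Bs where Bs: "Bs \<subseteq> ?U" "vec.independent Bs" "?U \<subseteq> vec.span Bs" "card Bs = vec.dim ?U"
    using vec.basis_exists[of ?U] by blast
  have "card Bs \<le> 1" using Bs(4) lt dim_U[OF S c] by simp
  moreover have "finite Bs" using Bs(1) finite_subset by blast
  ultimately obtain u where "Bs \<subseteq> {u}" using card_le1_sub by blast
  then have "vec.span Bs \<subseteq> vec.span {u}" by (rule vec.span_mono)
  then have r: "?U \<subseteq> vec.span {u}" using Bs(3) by (rule subset_trans[rotated])
  then have m: "B e1 e2 \<in> range (\<lambda>k. k *s u)" "B e1 e3 \<in> range (\<lambda>k. k *s u)"
      "B e2 e3 \<in> range (\<lambda>k. k *s u)" unfolding vec.span_singleton by auto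
  obtain c12 where u1: "B e1 e2 = c12 *s u" using m(1) unfolding image_iff by blast
  obtain c13 where u2: "B e1 e3 = c13 *s u" using m(2) unfolding image_iff by blast
  obtain c23 where u3: "B e2 e3 = c23 *s u" using m(3) unfolding image_iff by blast
  note u = u1 u2 u3
  have W0: "(0::'n V) \<in> W" using vec.subspace_0[OF sub] .
  have radical: "x \<in> W" if h: "\<forall>b1 b2 b3 w'. w' \<in> W \<longrightarrow> B x (b1 *s e1 + b2 *s e2 + b3 *s e3 + w') = 0" for x
  proof -
    have "\<forall>y. B y x = 0"
    proof
      fix y
      obtain b1 b2 b3 w' where y: "w' \<in> W" "y = b1 *s e1 + b2 *s e2 + b3 *s e3 + w'"
        using coords[OF sub c, of y] by blast
      have "B x y = 0" using h y by simp
      then show "B y x = 0" using ss_sym[OF S, of y x] by simp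
    qed
    then show ?thesis by (subst ss_W[OF S]) simp
  qed
  let ?x = "c23 *s e1 + c13 *s e2 + c12 *s e3"
  have "\<forall>b1 b2 b3 w'. w' \<in> W \<longrightarrow> B (?x + 0) (b1 *s e1 + b2 *s e2 + b3 *s e3 + w') = 0"
  proof (intro allI impI)
    fix b1 b2 b3 w' assume w': "w' \<in> W"
    have "B (?x + 0) (b1 *s e1 + b2 *s e2 + b3 *s e3 + w') =
       (c23*b2+c13*b1) *s (c12 *s u) + (c23*b3+c12*b1) *s (c13 *s u) + (c13*b3+c12*b2) *s (c23 *s u)"
      using expand[OF S W0 w', of c23 e1 c13 e2 c12 e3 b1 b2 b3] u by simp
    also have "\<dots> = ((c23*b2 + c13*b1)*c12 + (c23*b3 + c12*b1)*c13 + (c13*b3 + c12*b2)*c23) *s u"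
      by (rule scale3)
    also have "\<dots> = 0" by (simp only: bit_cross0 vec.scale_zero_left)
    finally show "B (?x + 0) (b1 *s e1 + b2 *s e2 + b3 *s e3 + w') = 0" .
  qed
  then have "?x + 0 \<in> W" by (rule radical)
  then have z: "c23 = 0" "c13 = 0" "c12 = 0" using indep_mod[OF sub dW c, of c23 c13 c12] by auto
  have "\<forall>b1 b2 b3 w'. w' \<in> W \<longrightarrow> B (1 *s e1 + 0 *s e2 + 0 *s e3 + 0) (b1 *s e1 + b2 *s e2 + b3 *s e3 + w') = 0"
  proof (intro allI impI)
    fix b1 b2 b3 w' assume w': "w' \<in> W"
    show "B (1 *s e1 + 0 *s e2 + 0 *s e3 + 0) (b1 *s e1 + b2 *s e2 + b3 *s e3 + w') = 0"
      using expand[OF S W0 w', of 1 e1 0 e2 0 e3 b1 b2 b3] u z by simp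
  qed
  then have "1 *s e1 + 0 *s e2 + 0 *s e3 + 0 \<in> W" by (rule radical)
  then have "1 *s e1 + 0 *s e2 + 0 *s e3 \<in> W" by simp
  then show False using indep_mod[OF sub dW c, of 1 0 0] by simp
qed

lemma card2_le: "card {x, y} \<le> 2"
  by (cases "x = y") simp_all

lemma card3_eq:
  assumes "card {a, b, c} = 3" shows "a \<noteq> b" "a \<noteq> c" "b \<noteq> c"
proof -
  show "a \<noteq> b"
  proof
    assume "a = b" then have "{a, b, c} = {b, c}" by simp
    then show False using assms card2_le[of b c] by simp
  qed
  show "a \<noteq> c"
  proof
    assume "a = c" then have "{a, b, c} = {b, c}" by auto
    then show False using assms card2_le[of b c] by simp
  qed
  show "b \<noteq> c"
  proof
    assume "b = c" then have "{a, b, c} = {a, c}" by simp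
    then show False using assms card2_le[of a c] by simp
  qed
qed

lemma nf3:
  assumes S: "sstruct B W" and d: "vec.dim (Urange B) = 3" and c: "cb W e1 e2 (e3::'n::finite V)"
  shows "B e1 e2 \<noteq> B e1 e3" "B e1 e2 \<noteq> B e2 e3" "B e1 e3 \<noteq> B e2 e3"
    "vec.independent {B e1 e2, B e1 e3, B e2 e3}"
proof -
  let ?U = "{B e1 e2, B e1 e3, B e2 e3}"
  have d3: "vec.dim ?U = 3" using d dim_U[OF S c] by simp
  have fin: "finite ?U" by simp
  have "vec.dim ?U \<le> card ?U" by (rule vec.dim_le_card[OF vec.span_superset fin])
  then have c3: "card ?U = 3" using card3[of "B e1 e2" "B e1 e3" "B e2 e3"] d3 by simp
  show "B e1 e2 \<noteq> B e1 e3" "B e1 e2 \<noteq> B e2 e3" "B e1 e3 \<noteq> B e2 e3"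
    using card3_eq[OF c3] by simp_all
  show "vec.independent ?U"
    by (rule vec.card_le_dim_spanning[OF subset_refl vec.span_superset fin]) (simp add: c3 d3)
qed

lemma bit_pair:
  assumes "\<not> ((al::bit) = 0 \<and> be = 0 \<and> ga = 0)"
  shows "\<exists>a1\<in>{0::bit,1}. \<exists>a2\<in>{0::bit,1}. \<exists>a3\<in>{0::bit,1}. \<exists>b1\<in>{0::bit,1}. \<exists>b2\<in>{0::bit,1}. \<exists>b3\<in>{0::bit,1}.
     a1*b2+a2*b1 = al \<and> a1*b3+a3*b1 = be \<and> a2*b3+a3*b2 = ga \<and> \<not>(a1=0\<and>a2=0\<and>a3=0) \<and>
     \<not>(b1=0\<and>b2=0\<and>b3=0) \<and> \<not>(a1=b1\<and>a2=b2\<and>a3=b3)"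
  using assms by (cases al; cases be; cases ga) (simp_all, blast+)

lemma bit_add_eq0: "((a::bit) + b = 0) = (a = b)"
  by (cases a; cases b) simp_all

lemma relation2:
  assumes S: "sstruct B W" and d: "vec.dim (Urange B) = 2" and c: "cb W e1 e2 (e3::'n::finite V)"
  shows "\<exists>al be ga. \<not> (al = 0 \<and> be = 0 \<and> ga = 0) \<and> al *s B e1 e2 + be *s B e1 e3 + ga *s B e2 e3 = 0"
proof -
  let ?p = "B e1 e2" and ?q = "B e1 e3" and ?r = "B e2 e3"
  have d2: "vec.dim (insert ?r (insert ?q {?p})) = 2" using d dim_U[OF S c] by (metis insert_commute)
  show ?thesis
  proof (cases "?r \<in> vec.span (insert ?q {?p})")
    case True
    then obtain k where "?r - k *s ?q \<in> range (\<lambda>c. c *s ?p)"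
      unfolding vec.span_insert[of ?q] vec.span_singleton by blast
    then obtain c where e: "?r + k *s ?q = c *s ?p" by auto
    have "c *s ?p + k *s ?q + 1 *s ?r = 0" unfolding e[symmetric] by (simp add: add_ac)
    then show ?thesis by (metis one_neq_zero)
  next
    case False
    then have d1: "vec.dim (insert ?q {?p}) = 1" using d2 dim_ins[OF False] by simp
    show ?thesis
    proof (cases "?q \<in> vec.span {?p}")
      case True
      then obtain c where "?q = c *s ?p" unfolding vec.span_singleton by blast
      then have "c *s ?p + 1 *s ?q + 0 *s ?r = 0" by (simp add: V_eq_iff[symmetric])
      then show ?thesis by (metis one_neq_zero)
    next
      case False
      then have "vec.dim {?p} = 0" using d1 dim_ins[OF False] by simp
      then have "?p \<in> vec.span {}"
      proof (rule contrapos_pp)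
        assume "?p \<notin> vec.span {}"
        then have "vec.dim {?p} = vec.dim ({}::'n V set) + 1" by (rule dim_ins)
        then show "vec.dim {?p} \<noteq> 0" by simp
      qed
      then have "1 *s ?p + 0 *s ?q + 0 *s ?r = 0" by simp
      then show ?thesis by (metis one_neq_zero)
    qed
  qed
qed

lemma dim_ins0: "vec.dim (insert (0::'n::finite V) S) = vec.dim S"
  using vec.dim_insert[of 0 S] vec.span_zero by simp

lemma nf2:
  assumes S: "sstruct B W" and d: "vec.dim (Urange B) = 2"
  shows "\<exists>e1 e2 e3. cb W e1 e2 (e3::'n::finite V) \<and> B e1 e2 = 0 \<and> B e1 e3 \<noteq> B e2 e3 \<and>
            vec.independent {B e1 e3, B e2 e3}"
proof -
  have sub: "vec.subspace W" and dW: "vec.dim W + 3 = CARD('n)" using ss_sub[OF S] ss_dim[OF S] .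
  obtain e1 e2 e3 where c: "cb W e1 e2 e3" using exists_cb[OF sub dW] by blast
  obtain al be ga where r: "\<not> (al = 0 \<and> be = 0 \<and> ga = 0)"
     "al *s B e1 e2 + be *s B e1 e3 + ga *s B e2 e3 = 0"
    using relation2[OF S d c] by blast
  obtain a1 a2 a3 b1 b2 b3 where ab: "a1*b2+a2*b1 = al" "a1*b3+a3*b1 = be" "a2*b3+a3*b2 = ga"
     "\<not>(a1=0\<and>a2=0\<and>a3=0)" "\<not>(b1=0\<and>b2=0\<and>b3=0)" "\<not>(a1=b1\<and>a2=b2\<and>a3=b3)"
    using bit_pair[OF r(1)] by blast
  define x where "x = a1 *s e1 + a2 *s e2 + a3 *s e3"
  define y where "y = b1 *s e1 + b2 *s e2 + b3 *s e3"
  have W0: "(0::'n V) \<in> W" using vec.subspace_0[OF sub] .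
  have Bxy: "B x y = 0"
    using expand[OF S W0 W0, of a1 e1 a2 e2 a3 e3 b1 b2 b3] r(2) ab(1-3) by (simp add: x_def y_def)
  have xW: "x \<notin> W" using indep_mod[OF sub dW c, of a1 a2 a3] ab(4) x_def by blast
  have yW: "y \<notin> vec.span (insert x W)"
  proof
    assume "y \<in> vec.span (insert x W)"
    moreover have sW: "vec.span W = W" using sub by simp
    ultimately obtain k where "y - k *s x \<in> W" unfolding vec.span_insert[of x] by auto
    moreover have "y - k *s x = (b1 + k*a1) *s e1 + (b2 + k*a2) *s e2 + (b3 + k*a3) *s e3"
      by (simp add: x_def y_def vec.scale_left_distrib vec.scale_right_distrib add_ac)
    ultimately have "b1 + k*a1 = 0 \<and> b2 + k*a2 = 0 \<and> b3 + k*a3 = 0"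
      using indep_mod[OF sub dW c] by metis
    then show False using ab(5,6)
      by (cases k; cases a1; cases a2; cases a3; cases b1; cases b2; cases b3) simp_all
  qed
  obtain z where c2: "cb W x y z" using complete2[OF sub dW xW yW] by blast
  let ?p = "B x z" and ?q = "B y z"
  have "vec.dim {0, ?p, ?q} = 2" using d dim_U[OF S c2] Bxy by simp
  then have "vec.dim {?p, ?q} = 2" by (simp only: dim_ins0)
  moreover have fin: "finite {?p, ?q}" by simp
  moreover have "vec.dim {?p, ?q} \<le> card {?p, ?q}" by (rule vec.dim_le_card[OF vec.span_superset fin])
  ultimately have c2'': "card {?p, ?q} = 2" using card2_le[of ?p ?q] by simp
  then have c2': "?p \<noteq> ?q" by (cases "?p = ?q") simp_all
  have "vec.independent {?p, ?q}"
    by (rule vec.card_le_dim_spanning[OF subset_refl vec.span_superset fin])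
       (simp add: c2'' \<open>vec.dim {?p, ?q} = 2\<close>)
  then show ?thesis using c2 Bxy c2' by blast
qed

lemma cb_props:
  assumes W: "vec.subspace W" "vec.dim W + 3 = CARD('n)" and c: "cb W e1 e2 (e3::'n::finite V)"
  shows "e1 \<notin> W" "e2 \<notin> W" "e3 \<notin> W" "e1 \<noteq> e2" "e1 \<noteq> e3" "e2 \<noteq> e3"
proof -
  have W0: "0 \<in> W" using vec.subspace_0[OF W(1)] .
  show "e1 \<notin> W"
  proof
    assume "e1 \<in> W" then have "1 *s e1 + 0 *s e2 + 0 *s e3 \<in> W" by simp
    then show False using indep_mod[OF W c] by blast
  qed
  show "e2 \<notin> W"
  proof
    assume "e2 \<in> W" then have "0 *s e1 + 1 *s e2 + 0 *s e3 \<in> W" by simp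
    then show False using indep_mod[OF W c] by blast
  qed
  show "e3 \<notin> W"
  proof
    assume "e3 \<in> W" then have "0 *s e1 + 0 *s e2 + 1 *s e3 \<in> W" by simp
    then show False using indep_mod[OF W c] by blast
  qed
  show "e1 \<noteq> e2"
  proof
    assume "e1 = e2" then have "1 *s e1 + 1 *s e2 + 0 *s e3 \<in> W" using W0 by simp
    then show False using indep_mod[OF W c] by blast
  qed
  show "e1 \<noteq> e3"
  proof
    assume "e1 = e3" then have "1 *s e1 + 0 *s e2 + 1 *s e3 \<in> W" using W0 by (simp add: add_ac)
    then show False using indep_mod[OF W c] by blast
  qed
  show "e2 \<noteq> e3"
  proof
    assume "e2 = e3" then have "0 *s e1 + 1 *s e2 + 1 *s e3 \<in> W" using W0 by simp
    then show False using indep_mod[OF W c] by blast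
  qed
qed

lemma construct:
  assumes W1: "vec.subspace W1" "vec.dim W1 + 3 = CARD('n)"
    and W2: "vec.subspace W2" "vec.dim W2 + 3 = CARD('n)"
    and c1: "cb W1 e1 e2 e3" and c2: "cb W2 f1 f2 (f3::'n::finite V)"
    and I: "I1 \<subseteq> W1" "I2 \<subseteq> W2" "vec.independent I1" "vec.independent I2"
    and phi: "bij_betw \<phi> I1 I2"
  shows "\<exists>g\<in>GLV. (\<forall>w\<in>W1. g w \<in> W2) \<and> (\<forall>i\<in>I1. g i = \<phi> i) \<and> g e1 = f1 \<and> g e2 = f2 \<and> g e3 = f3"
proof -
  obtain C1 where C1: "I1 \<subseteq> C1" "C1 \<subseteq> W1" "vec.independent C1" "W1 \<subseteq> vec.span C1"
    using vec.maximal_independent_subset_extend[OF I(1,3)] by blast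
  obtain C2 where C2: "I2 \<subseteq> C2" "C2 \<subseteq> W2" "vec.independent C2" "W2 \<subseteq> vec.span C2"
    using vec.maximal_independent_subset_extend[OF I(2,4)] by blast
  have fin: "finite C1" "finite C2" using C1(3) C2(3) vec.finiteI_independent by auto
  have cardC: "card C1 = vec.dim W1" "card C2 = vec.dim W2"
    using vec.basis_card_eq_dim[OF C1(2,4,3)] vec.basis_card_eq_dim[OF C2(2,4,3)] by auto
  have cI: "card I1 = card I2" using bij_betw_same_card[OF phi] .
  have finI: "finite I1" "finite I2" using C1(1) C2(1) fin finite_subset by auto
  have cd: "card (C1 - I1) = card (C2 - I2)"
    using cardC cI W1(2) W2(2) card_Diff_subset[OF finI(1) C1(1)] card_Diff_subset[OF finI(2) C2(1)]
    by simp
  then obtain \<psi> where psi: "bij_betw \<psi> (C1 - I1) (C2 - I2)"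
    using finite_same_card_bij[OF finite_Diff[OF fin(1)] finite_Diff[OF fin(2)] cd] by blast
  have sW1: "vec.span W1 = W1" using W1(1) by simp
  have W10: "0 \<in> W1" using vec.subspace_0[OF W1(1)] .
  have eW: "e1 \<notin> W1" "e2 \<notin> W1" "e3 \<notin> W1" and ed: "e1 \<noteq> e2" "e1 \<noteq> e3" "e2 \<noteq> e3"
    using cb_props[OF W1 c1] by auto
  define D1 where "D1 = insert e1 (insert e2 (insert e3 C1))"
  have spD: "vec.span D1 = UNIV"
  proof -
    have "W1 \<subseteq> vec.span D1" using C1(4) vec.span_mono[of C1 D1] unfolding D1_def by blast
    moreover have "e1 \<in> vec.span D1" "e2 \<in> vec.span D1" "e3 \<in> vec.span D1"
      unfolding D1_def by (simp_all add: vec.span_base)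
    ultimately have "insert e1 (insert e2 (insert e3 W1)) \<subseteq> vec.span D1" by simp
    then have "vec.span (insert e1 (insert e2 (insert e3 W1))) \<subseteq> vec.span D1"
      by (rule vec.span_minimal[OF _ vec.subspace_span])
    then show ?thesis using c1 unfolding cb_def by blast
  qed
  have nC: "e1 \<notin> C1" "e2 \<notin> C1" "e3 \<notin> C1" using eW C1(2) by auto
  have "card D1 \<le> card C1 + 3" unfolding D1_def using fin(1) nC ed by simp
  then have cD: "card D1 \<le> CARD('n)" using cardC W1(2) by simp
  have finD: "finite D1" using fin unfolding D1_def by simp
  have indD: "vec.independent D1"
    by (rule vec.card_le_dim_spanning[OF subset_UNIV _ finD]) (simp_all add: spD cD card_cart_basis)
  define f where "f v = (if v \<in> I1 then \<phi> v else if v \<in> C1 then \<psi> v else if v = e1 then f1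
      else if v = e2 then f2 else f3)" for v
  define g where "g = vec.construct D1 f"
  have lin: "Vector_Spaces.linear (*s) (*s) g" unfolding g_def using vec.linear_construct[OF indD] .
  interpret lg: Vector_Spaces.linear "(*s)" "(*s)" g by (rule lin)
  have gD: "g v = f v" if "v \<in> D1" for v unfolding g_def using vec.construct_basis[OF indD that] .
  have eC: "e1 \<notin> C1" "e2 \<notin> C1" "e3 \<notin> C1" "e1 \<notin> I1" "e2 \<notin> I1" "e3 \<notin> I1"
    using eW C1(1,2) by auto
  have ge: "g e1 = f1" "g e2 = f2" "g e3 = f3"
    using gD[of e1] gD[of e2] gD[of e3] eC ed unfolding D1_def f_def by auto
  have gI: "\<forall>i\<in>I1. g i = \<phi> i" using gD C1(1) unfolding D1_def f_def by auto
  have gC: "g ` C1 = C2"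
  proof
    show "g ` C1 \<subseteq> C2"
    proof
      fix v assume "v \<in> g ` C1"
      then obtain u where u: "u \<in> C1" "v = g u" by blast
      then have "v = f u" using gD unfolding D1_def by auto
      then show "v \<in> C2" using u(1) phi psi C2(1) unfolding f_def bij_betw_def by auto
    qed
    show "C2 \<subseteq> g ` C1"
    proof
      fix v assume v: "v \<in> C2"
      show "v \<in> g ` C1"
      proof (cases "v \<in> I2")
        case True
        then obtain i where "i \<in> I1" "v = \<phi> i" using phi unfolding bij_betw_def by blast
        then show ?thesis using gI C1(1) by force
      next
        case False
        then obtain u where u: "u \<in> C1 - I1" "v = \<psi> u" using psi v unfolding bij_betw_def by blast
        then have "g u = v" using gD[of u] unfolding D1_def f_def by auto
        then show ?thesis using u(1) by blast
      qed
    qed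
  qed
  have gW: "\<forall>w\<in>W1. g w \<in> W2"
  proof
    fix w assume "w \<in> W1"
    then have "g w \<in> g ` vec.span C1" using C1(4) by blast
    also have "\<dots> = vec.span C2" using lg.span_image[of C1] gC by simp
    also have "\<dots> \<subseteq> W2" using vec.span_minimal[OF C2(2) W2(1)] .
    finally show "g w \<in> W2" .
  qed
  have "surj g"
  proof -
    have "f1 \<in> g ` D1" "f2 \<in> g ` D1" "f3 \<in> g ` D1" using ge unfolding D1_def by auto
    then have f: "f1 \<in> vec.span (g ` D1)" "f2 \<in> vec.span (g ` D1)" "f3 \<in> vec.span (g ` D1)"
      by (simp_all add: vec.span_base)
    have "C2 \<subseteq> g ` D1" using gC unfolding D1_def by auto
    then have "vec.span C2 \<subseteq> vec.span (g ` D1)" by (rule vec.span_mono)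
    then have "W2 \<subseteq> vec.span (g ` D1)" using C2(4) by (rule subset_trans[rotated])
    then have "insert f1 (insert f2 (insert f3 W2)) \<subseteq> vec.span (g ` D1)" using f by simp
    then have "vec.span (insert f1 (insert f2 (insert f3 W2))) \<subseteq> vec.span (g ` D1)"
      by (rule vec.span_minimal[OF _ vec.subspace_span])
    then have "vec.span (g ` D1) = UNIV" using c2 unfolding cb_def by blast
    then show ?thesis using lg.span_image[of D1] spD by simp
  qed
  moreover have "inj g" using vec.linear_surj_imp_inj[OF lin \<open>surj g\<close>] .
  ultimately have "g \<in> GLV" unfolding GLV_def bij_def using lin by blast
  then show ?thesis using gW gI ge by blast
qed

lemma compat:
  assumes S1: "sstruct B1 W1" and S2: "sstruct B2 W2" and c1: "cb W1 e1 e2 (e3::'n::finite V)"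
    and lin: "Vector_Spaces.linear (*s) (*s) g" and gW: "\<forall>w\<in>W1. g w \<in> W2"
    and ge: "g e1 = f1" "g e2 = f2" "g e3 = f3"
    and gu: "g (B1 e1 e2) = B2 f1 f2" "g (B1 e1 e3) = B2 f1 f3" "g (B1 e2 e3) = B2 f2 f3"
  shows "g (B1 x y) = B2 (g x) (g y)"
proof -
  have sub: "vec.subspace W1" using ss_sub[OF S1] .
  obtain a1 a2 a3 w where x: "w \<in> W1" "x = a1 *s e1 + a2 *s e2 + a3 *s e3 + w"
    using coords[OF sub c1] by blast
  obtain b1 b2 b3 w' where y: "w' \<in> W1" "y = b1 *s e1 + b2 *s e2 + b3 *s e3 + w'"
    using coords[OF sub c1] by blast
  have gx: "g x = a1 *s f1 + a2 *s f2 + a3 *s f3 + g w"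
    unfolding x(2) by (simp add: lin_add[OF lin] lin_scale[OF lin] ge)
  have gy: "g y = b1 *s f1 + b2 *s f2 + b3 *s f3 + g w'"
    unfolding y(2) by (simp add: lin_add[OF lin] lin_scale[OF lin] ge)
  have "g (B1 x y) = g ((a1*b2+a2*b1) *s B1 e1 e2 + (a1*b3+a3*b1) *s B1 e1 e3 + (a2*b3+a3*b2) *s B1 e2 e3)"
    unfolding x(2) y(2) expand[OF S1 x(1) y(1)] ..
  also have "\<dots> = (a1*b2+a2*b1) *s B2 f1 f2 + (a1*b3+a3*b1) *s B2 f1 f3 + (a2*b3+a3*b2) *s B2 f2 f3"
    by (simp add: lin_add[OF lin] lin_scale[OF lin] gu)
  also have "\<dots> = B2 (g x) (g y)"
    unfolding gx gy using expand[OF S2, of "g w" "g w'"] gW x(1) y(1) by simp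
  finally show ?thesis .
qed

lemma iso3:
  assumes S1: "sstruct B1 W1" and S2: "sstruct B2 W2"
    and d1: "vec.dim (Urange B1) = 3" and d2: "vec.dim (Urange B2) = 3"
    and c1: "cb W1 e1 e2 (e3::'n::finite V)" and c2: "cb W2 f1 f2 f3"
  shows "\<exists>g\<in>GLV. g e1 = f1 \<and> (\<forall>x y. g (B1 x y) = B2 (g x) (g y))"
proof -
  let ?p1 = "B1 e1 e2" and ?q1 = "B1 e1 e3" and ?r1 = "B1 e2 e3"
  let ?p2 = "B2 f1 f2" and ?q2 = "B2 f1 f3" and ?r2 = "B2 f2 f3"
  note n1 = nf3[OF S1 d1 c1] and n2 = nf3[OF S2 d2 c2]
  define \<phi> where "\<phi> v = (if v = ?p1 then ?p2 else if v = ?q1 then ?q2 else ?r2)" for v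
  have ph: "\<phi> ?p1 = ?p2" "\<phi> ?q1 = ?q2" "\<phi> ?r1 = ?r2" using n1 unfolding \<phi>_def by auto
  have bij: "bij_betw \<phi> {?p1, ?q1, ?r1} {?p2, ?q2, ?r2}"
  proof (rule bij_betw_imageI)
    show "inj_on \<phi> {?p1, ?q1, ?r1}" unfolding inj_on_def using ph n1(1-3) n2(1-3) by auto
    show "\<phi> ` {?p1, ?q1, ?r1} = {?p2, ?q2, ?r2}" using ph by auto
  qed
  have I1: "{?p1, ?q1, ?r1} \<subseteq> W1" using ss_in[OF S1] by auto
  have I2: "{?p2, ?q2, ?r2} \<subseteq> W2" using ss_in[OF S2] by auto
  obtain g where g: "g \<in> GLV" "\<forall>w\<in>W1. g w \<in> W2" "\<forall>i\<in>{?p1, ?q1, ?r1}. g i = \<phi> i"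
      "g e1 = f1" "g e2 = f2" "g e3 = f3"
    using construct[OF ss_sub[OF S1] ss_dim[OF S1] ss_sub[OF S2] ss_dim[OF S2] c1 c2 I1 I2 n1(4) n2(4) bij]
    by blast
  have gu: "g ?p1 = ?p2" "g ?q1 = ?q2" "g ?r1 = ?r2" using g(3) ph by auto
  have "\<forall>x y. g (B1 x y) = B2 (g x) (g y)"
    using compat[OF S1 S2 c1 GLV_D(1)[OF g(1)] g(2) g(4-6) gu] by blast
  then show ?thesis using g by blast
qed

lemma iso2:
  assumes S1: "sstruct B1 W1" and S2: "sstruct B2 W2"
    and c1: "cb W1 e1 e2 (e3::'n::finite V)" and c2: "cb W2 f1 f2 f3"
    and z1: "B1 e1 e2 = 0" and n1: "B1 e1 e3 \<noteq> B1 e2 e3" "vec.independent {B1 e1 e3, B1 e2 e3}"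
    and z2: "B2 f1 f2 = 0" and n2: "B2 f1 f3 \<noteq> B2 f2 f3" "vec.independent {B2 f1 f3, B2 f2 f3}"
  shows "\<exists>g\<in>GLV. (\<forall>x y. g (B1 x y) = B2 (g x) (g y))"
proof -
  let ?q1 = "B1 e1 e3" and ?r1 = "B1 e2 e3"
  let ?q2 = "B2 f1 f3" and ?r2 = "B2 f2 f3"
  define \<phi> where "\<phi> v = (if v = ?q1 then ?q2 else ?r2)" for v
  have ph: "\<phi> ?q1 = ?q2" "\<phi> ?r1 = ?r2" using n1 unfolding \<phi>_def by auto
  have bij: "bij_betw \<phi> {?q1, ?r1} {?q2, ?r2}"
  proof (rule bij_betw_imageI)
    show "inj_on \<phi> {?q1, ?r1}" unfolding inj_on_def using ph n1(1) n2(1) by auto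
    show "\<phi> ` {?q1, ?r1} = {?q2, ?r2}" using ph by auto
  qed
  have I1: "{?q1, ?r1} \<subseteq> W1" using ss_in[OF S1] by auto
  have I2: "{?q2, ?r2} \<subseteq> W2" using ss_in[OF S2] by auto
  obtain g where g: "g \<in> GLV" "\<forall>w\<in>W1. g w \<in> W2" "\<forall>i\<in>{?q1, ?r1}. g i = \<phi> i"
      "g e1 = f1" "g e2 = f2" "g e3 = f3"
    using construct[OF ss_sub[OF S1] ss_dim[OF S1] ss_sub[OF S2] ss_dim[OF S2] c1 c2 I1 I2 n1(2) n2(2) bij]
    by blast
  have gu: "g (B1 e1 e2) = B2 f1 f2" "g ?q1 = ?q2" "g ?r1 = ?r2"
    using g(3) ph z1 z2 GLV_D(3)[OF g(1)] by auto
  have "\<forall>x y. g (B1 x y) = B2 (g x) (g y)"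
    using compat[OF S1 S2 c1 GLV_D(1)[OF g(1)] g(2) g(4-6) gu] by blast
  then show ?thesis using g by blast
qed

lemma GLV_comp: "f \<in> GLV \<Longrightarrow> g \<in> GLV \<Longrightarrow> f \<circ> g \<in> (GLV :: ('n::finite V \<Rightarrow> 'n V) set)"
  unfolding GLV_def using Vector_Spaces.linear_compose bij_comp by blast

lemma GLV_inv: assumes "g \<in> (GLV :: ('n::finite V \<Rightarrow> 'n V) set)" shows "inv g \<in> GLV"
proof -
  have "Vector_Spaces.linear (*s) (*s) (inv g)"
    using vec.inj_linear_imp_inv_linear GLV_D(1,2)[OF assms] bij_is_inj by blast
  then show ?thesis unfolding GLV_def using bij_imp_bij_inv GLV_D(2)[OF assms] by blast
qed

lemma conj_eq:
  assumes g: "g \<in> GLV" and c: "\<forall>x y. g (B1 x y) = B2 (g x) (g (y::'n::finite V))"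
  shows "conj_set g (Hs B1) = Hs B2"
proof
  have ci: "inv g (B2 x y) = B1 (inv g x) (inv g y)" for x y
    using c[rule_format, of "inv g x" "inv g y"] GLV_D[OF g] by metis
  show "conj_set g (Hs B1) \<subseteq> Hs B2"
  proof
    fix k assume "k \<in> conj_set g (Hs B1)"
    then obtain h where h: "h \<in> Hs B1" "k = g \<circ> h \<circ> inv g" unfolding conj_set_def by blast
    have hG: "h \<in> GLV" and hc: "\<And>x y. h (B1 x y) = B1 (h x) (h y)" using h(1) unfolding Hs_def by auto
    have "k \<in> GLV" unfolding h(2) using GLV_comp[OF GLV_comp[OF g hG] GLV_inv[OF g]] .
    moreover have "k (B2 x y) = B2 (k x) (k y)" for x y
      unfolding h(2) by (simp add: ci hc c)
    ultimately show "k \<in> Hs B2" unfolding Hs_def by blast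
  qed
  show "Hs B2 \<subseteq> conj_set g (Hs B1)"
  proof
    fix k assume "k \<in> Hs B2"
    then have kG: "k \<in> GLV" and kc: "\<And>x y. k (B2 x y) = B2 (k x) (k y)" unfolding Hs_def by auto
    let ?h = "inv g \<circ> k \<circ> g"
    have "?h \<in> GLV" using GLV_comp[OF GLV_comp[OF GLV_inv[OF g] kG] g] .
    moreover have "?h (B1 x y) = B1 (?h x) (?h y)" for x y
      by (simp add: ci kc c)
    ultimately have hm: "?h \<in> Hs B1" unfolding Hs_def by blast
    have he: "g \<circ> ?h \<circ> inv g = k" by (rule ext) (simp add: GLV_D[OF g])
    show "k \<in> conj_set g (Hs B1)" unfolding conj_set_def using image_eqI[where f="\<lambda>h. g \<circ> h \<circ> inv g", OF he[symmetric] hm] .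
  qed
qed

definition Qp :: "('n::finite V \<Rightarrow> 'n V) set \<Rightarrow> bool" where
  "Qp H \<longleftrightarrow> (\<exists>S. vec.subspace S \<and> S \<noteq> UNIV \<and> CARD('n) \<le> vec.dim S + 2 \<and> (\<forall>h\<in>H. \<forall>x\<in>S. h x \<in> S))"

lemma Q_conj:
  assumes g: "g \<in> GLV" and Q: "Qp (H :: ('n::finite V \<Rightarrow> 'n V) set)"
  shows "Qp (conj_set g H)"
proof -
  obtain S where S: "vec.subspace S" "S \<noteq> UNIV" "CARD('n) \<le> vec.dim S + 2" "\<forall>h\<in>H. \<forall>x\<in>S. h x \<in> S"
    using Q unfolding Qp_def by blast
  have lin: "Vector_Spaces.linear (*s) (*s) g" and bij: "bij g" using GLV_D[OF g] by auto
  interpret lg: Vector_Spaces.linear "(*s)" "(*s)" g by (rule lin)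
  have inj: "inj g" using bij bij_is_inj by blast
  have s1: "vec.subspace (g ` S)" using lg.subspace_image[OF S(1)] .
  have s2: "g ` S \<noteq> UNIV"
  proof
    assume a: "g ` S = UNIV"
    obtain y where y: "y \<notin> S" using S(2) by blast
    have "g y \<in> g ` S" using a by simp
    then obtain s where "s \<in> S" "g y = g s" by blast
    then have "y \<in> S" using inj unfolding inj_def by metis
    then show False using y by simp
  qed
  have s3: "vec.dim (g ` S) = vec.dim S"
    by (rule vec.dim_image_eq[OF lin]) (use inj in \<open>simp add: inj_on_def inj_def\<close>)
  have s4: "\<forall>k\<in>conj_set g H. \<forall>x\<in>g ` S. k x \<in> g ` S"
  proof (intro ballI)
    fix k x assume k: "k \<in> conj_set g H" and x: "x \<in> g ` S"
    then obtain h where h: "h \<in> H" "k = g \<circ> h \<circ> inv g" unfolding conj_set_def by blast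
    obtain s where s: "s \<in> S" "x = g s" using x by blast
    have "k x = g (h s)" using h(2) s(2) GLV_D(5)[OF g] by simp
    then show "k x \<in> g ` S" using S(4) h(1) s(1) by blast
  qed
  show ?thesis unfolding Qp_def using s1 s2 s3 s4 S(3) by metis
qed

lemma conj_inv:
  assumes g: "g \<in> GLV" shows "conj_set (inv g) (conj_set g H) = H"
proof -
  have ii: "inv (inv g) = g" using GLV_D(2)[OF g] by (simp add: inv_inv_eq)
  have e: "inv g \<circ> (g \<circ> h \<circ> inv g) \<circ> inv (inv g) = h" for h
    by (rule ext) (simp add: ii GLV_D[OF g])
  show ?thesis unfolding conj_set_def image_image e by simp
qed

lemma H_pres:
  assumes S: "sstruct B W" and h: "h \<in> Hs B" and w: "w \<in> W" shows "h w \<in> W"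
proof -
  have hG: "h \<in> GLV" and hc: "\<And>x y. h (B x y) = B (h x) (h y)" using h unfolding Hs_def by auto
  have "B y (h w) = 0" for y
  proof -
    have "B y (h w) = B (h (inv h y)) (h w)" using GLV_D(4)[OF hG] by simp
    also have "\<dots> = h (B (inv h y) w)" using hc by simp
    also have "\<dots> = 0" using ss_Wr[OF S w] GLV_D(3)[OF hG] by simp
    finally show ?thesis .
  qed
  then show ?thesis by (subst ss_W[OF S]) simp
qed

lemma H_refl:
  assumes S: "sstruct B W" and h: "h \<in> Hs B" and w: "h z \<in> W" shows "z \<in> W"
proof -
  have hG: "h \<in> GLV" and hc: "\<And>x y. h (B x y) = B (h x) (h y)" using h unfolding Hs_def by auto
  have "B y z = 0" for y
  proof -
    have "h (B y z) = B (h y) (h z)" using hc by simp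
    also have "\<dots> = 0" using ss_Wr[OF S w] by simp
    finally have "h (B y z) = h 0" using GLV_D(3)[OF hG] by simp
    then show ?thesis using GLV_D(5)[OF hG] by metis
  qed
  then show ?thesis by (subst ss_W[OF S]) simp
qed

lemma bit_rank2:
  assumes "\<not> ((a1::bit) = 0 \<and> a2 = 0 \<and> a3 = 0)" "\<not> ((b1::bit) = 0 \<and> b2 = 0 \<and> b3 = 0)"
    "\<not> (a1 = b1 \<and> a2 = b2 \<and> a3 = b3)" "a1*b3 + a3*b1 = 0" "a2*b3 + a3*b2 = 0"
  shows "a3 = 0 \<and> b3 = 0"
  using assms by (cases a1; cases a2; cases a3; cases b1; cases b2; cases b3) simp_all

lemma memS2:
  assumes W: "vec.subspace W"
  shows "v \<in> vec.span (insert e1 (insert e2 W)) \<longleftrightarrow>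
     (\<exists>k1 k2 w. w \<in> W \<and> v = k1 *s e1 + k2 *s (e2::'n::finite V) + w)"
proof
  have sW: "vec.span W = W" using W by simp
  assume "v \<in> vec.span (insert e1 (insert e2 W))"
  then obtain k1 where "v + k1 *s e1 \<in> vec.span (insert e2 W)"
    unfolding vec.span_insert[of e1] by auto
  then obtain k2 where k: "v + k1 *s e1 + k2 *s e2 \<in> W"
    unfolding vec.span_insert[of e2] sW by auto
  show "\<exists>k1 k2 w. w \<in> W \<and> v = k1 *s e1 + k2 *s e2 + w"
    by (rule exI[of _ k1], rule exI[of _ k2], rule exI[of _ "v + k1 *s e1 + k2 *s e2"])
       (use k in \<open>simp add: add_ac\<close>)
next
  assume "\<exists>k1 k2 w. w \<in> W \<and> v = k1 *s e1 + k2 *s e2 + w"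
  then obtain k1 k2 w where k: "w \<in> W" "v = k1 *s e1 + k2 *s e2 + w" by blast
  let ?T = "vec.span (insert e1 (insert e2 W))"
  have "w \<in> ?T" using vec.span_superset[of "insert e1 (insert e2 W)"] k(1) by blast
  moreover have "e1 \<in> ?T" "e2 \<in> ?T" by (simp_all add: vec.span_base)
  ultimately show "v \<in> ?T" unfolding k(2)
    by (intro vec.span_add vec.span_scale)
qed

lemma Q_rank2:
  assumes S: "sstruct B W" and d: "vec.dim (Urange (B :: 'n::finite V \<Rightarrow> _)) = 2"
  shows "Qp (Hs B)"
proof -
  have sub: "vec.subspace W" and dW: "vec.dim W + 3 = CARD('n)" using ss_sub[OF S] ss_dim[OF S] .
  obtain e1 e2 e3 where c: "cb W e1 e2 e3" and z: "B e1 e2 = 0"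
    and n: "B e1 e3 \<noteq> B e2 e3" "vec.independent {B e1 e3, B e2 e3}"
    using nf2[OF S d] by blast
  note cp = cb_props[OF sub dW c]
  have W0: "(0::'n V) \<in> W" using vec.subspace_0[OF sub] .
  define S0 where "S0 = vec.span (insert e1 (insert e2 W))"
  have s1: "vec.subspace S0" unfolding S0_def by simp
  have s2: "S0 \<noteq> UNIV"
  proof
    assume "S0 = UNIV"
    then have "e3 \<in> S0" by simp
    then obtain k1 k2 w where k: "w \<in> W" "e3 = k1 *s e1 + k2 *s e2 + w"
      unfolding S0_def memS2[OF sub] by blast
    have "k1 *s e1 + k2 *s e2 + 1 *s e3 = w" unfolding k(2) by (simp add: add_ac)
    then have "k1 *s e1 + k2 *s e2 + 1 *s e3 \<in> W" using k(1) by simp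
    then show False using indep_mod[OF sub dW c, of k1 k2 1] by simp
  qed
  have s3: "CARD('n) \<le> vec.dim S0 + 2"
  proof -
    have "insert e1 W \<subseteq> S0" unfolding S0_def by (rule subset_trans[OF _ vec.span_superset]) auto
    then have "vec.dim (insert e1 W) \<le> vec.dim S0" by (rule vec.dim_subset)
    moreover have "vec.dim (insert e1 W) = vec.dim W + 1"
    proof -
      have sW: "vec.span W = W" using sub by simp
      have "e1 \<notin> vec.span W" unfolding sW using cp(1) .
      then show ?thesis by (rule dim_ins)
    qed
    ultimately show ?thesis using dW by simp
  qed
  have s4: "\<forall>h\<in>Hs B. \<forall>x\<in>S0. h x \<in> S0"
  proof (intro ballI)
    fix h x assume h: "h \<in> Hs B" and x: "x \<in> S0"
    have hG: "h \<in> GLV" and hc: "\<And>x y. h (B x y) = B (h x) (h y)" using h unfolding Hs_def by auto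
    have lin: "Vector_Spaces.linear (*s) (*s) h" using GLV_D(1)[OF hG] .
    obtain a1 a2 a3 w1 where a: "w1 \<in> W" "h e1 = a1 *s e1 + a2 *s e2 + a3 *s e3 + w1"
      using coords[OF sub c] by blast
    obtain b1 b2 b3 w2 where b: "w2 \<in> W" "h e2 = b1 *s e1 + b2 *s e2 + b3 *s e3 + w2"
      using coords[OF sub c] by blast
    have "0 = h (B e1 e2)" using z GLV_D(3)[OF hG] by simp
    also have "\<dots> = B (h e1) (h e2)" by (rule hc)
    also have "\<dots> = (a1*b3+a3*b1) *s B e1 e3 + (a2*b3+a3*b2) *s B e2 e3"
      unfolding a(2) b(2) expand[OF S a(1) b(1)] z by simp
    finally have "(a1*b3+a3*b1) *s B e1 e3 + (a2*b3+a3*b2) *s B e2 e3 = 0" by simp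
    then have eq: "a1*b3+a3*b1 = 0" "a2*b3+a3*b2 = 0" using pair_indep[OF n(2) n(1)] by blast+
    have na: "\<not> (a1 = 0 \<and> a2 = 0 \<and> a3 = 0)"
    proof
      assume "a1 = 0 \<and> a2 = 0 \<and> a3 = 0"
      then have "h e1 \<in> W" using a by simp
      then show False using H_refl[OF S h, of e1] cp(1) by blast
    qed
    have nb: "\<not> (b1 = 0 \<and> b2 = 0 \<and> b3 = 0)"
    proof
      assume "b1 = 0 \<and> b2 = 0 \<and> b3 = 0"
      then have "h e2 \<in> W" using b by simp
      then show False using H_refl[OF S h, of e2] cp(2) by blast
    qed
    have nab: "\<not> (a1 = b1 \<and> a2 = b2 \<and> a3 = b3)"
    proof
      assume ab: "a1 = b1 \<and> a2 = b2 \<and> a3 = b3"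
      have "h (e1 + e2) = h e1 + h e2" using lin_add[OF lin] .
      also have "\<dots> = w1 + w2" unfolding a(2) b(2) using ab by (simp add: add_ac)
      finally have "h (e1 + e2) \<in> W" using a(1) b(1) vec.subspace_add[OF sub] by simp
      then have "e1 + e2 \<in> W" using H_refl[OF S h, of "e1 + e2"] by blast
      then have "1 *s e1 + 1 *s e2 + 0 *s e3 \<in> W" by simp
      then show False using indep_mod[OF sub dW c, of 1 1 0] by simp
    qed
    have a3b3: "a3 = 0 \<and> b3 = 0" using bit_rank2[OF na nb nab eq] .
    have he1: "h e1 \<in> S0" unfolding S0_def memS2[OF sub]
      by (intro exI[of _ a1] exI[of _ a2] exI[of _ w1]) (use a a3b3 in simp)
    have he2: "h e2 \<in> S0" unfolding S0_def memS2[OF sub]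
      by (intro exI[of _ b1] exI[of _ b2] exI[of _ w2]) (use b a3b3 in simp)
    obtain k1 k2 w where k: "w \<in> W" "x = k1 *s e1 + k2 *s e2 + w"
      using x unfolding S0_def memS2[OF sub] by blast
    have hw: "h w \<in> S0" using H_pres[OF S h k(1)] vec.span_superset[of "insert e1 (insert e2 W)"]
      unfolding S0_def by blast
    have "h x = k1 *s h e1 + k2 *s h e2 + h w" unfolding k(2) by (simp add: lin_add[OF lin] lin_scale[OF lin])
    also have "\<dots> \<in> S0" using he1 he2 hw unfolding S0_def
      by (intro vec.span_add vec.span_scale)
    finally show "h x \<in> S0" .
  qed
  show ?thesis unfolding Qp_def by (rule exI[of _ S0]) (use s1 s2 s3 s4 in blast)
qed

lemma notQ_rank3:
  assumes S: "sstruct B W" and d: "vec.dim (Urange (B :: 'n::finite V \<Rightarrow> _)) = 3"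
  shows "\<not> Qp (Hs B)"
proof
  assume "Qp (Hs B)"
  then obtain S0 where S0: "vec.subspace S0" "S0 \<noteq> UNIV" "CARD('n) \<le> vec.dim S0 + 2"
      "\<forall>h\<in>Hs B. \<forall>x\<in>S0. h x \<in> S0" unfolding Qp_def by blast
  have sub: "vec.subspace W" and dW: "vec.dim W + 3 = CARD('n)" using ss_sub[OF S] ss_dim[OF S] .
  have "\<not> S0 \<subseteq> W"
  proof
    assume "S0 \<subseteq> W" then have "vec.dim S0 \<le> vec.dim W" by (rule vec.dim_subset)
    then show False using S0(3) dW by simp
  qed
  then obtain x where x: "x \<in> S0" "x \<notin> W" by blast
  have all: "y \<in> S0" if y: "y \<notin> W" for y
  proof -
    obtain e2 e3 where c1: "cb W x e2 e3" using complete1[OF sub dW x(2)] by blast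
    obtain f2 f3 where c2: "cb W y f2 f3" using complete1[OF sub dW y] by blast
    obtain g where g: "g \<in> GLV" "g x = y" "\<forall>u v. g (B u v) = B (g u) (g v)"
      using iso3[OF S S d d c1 c2] by blast
    have "g \<in> Hs B" unfolding Hs_def using g(1,3) by blast
    then show "y \<in> S0" using S0(4) x(1) g(2) by blast
  qed
  have "v \<in> S0" for v
  proof (cases "v \<in> W")
    case False then show ?thesis using all by blast
  next
    case True
    have "v + x \<notin> W"
    proof
      assume "v + x \<in> W"
      then have "v + (v + x) \<in> W" using True vec.subspace_add[OF sub] by blast
      then show False using x(2) by simp
    qed
    then have "v + x \<in> S0" using all by blast
    then have "(v + x) + x \<in> S0" using x(1) vec.subspace_add[OF S0(1)] by blast
    then show ?thesis by (simp add: add.assoc)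
  qed
  then show False using S0(2) by blast
qed

lemma rank23:
  assumes S: "sstruct B W" shows "vec.dim (Urange (B :: 'n::finite V \<Rightarrow> _)) = 2 \<or> vec.dim (Urange B) = 3"
  using rank_ge2[OF S] rank_le3[OF S] by linarith

lemma main_abs:
  assumes S1: "sstruct B1 W1" and S2: "sstruct B2 W2"
  shows "(\<exists>g\<in>GLV. conj_set g (Hs B1) = Hs B2) \<longleftrightarrow>
         vec.dim (Urange (B1 :: 'n::finite V \<Rightarrow> _)) = vec.dim (Urange B2)"
proof
  assume "\<exists>g\<in>GLV. conj_set g (Hs B1) = Hs B2"
  then obtain g where g: "g \<in> GLV" "conj_set g (Hs B1) = Hs B2" by blast
  show "vec.dim (Urange B1) = vec.dim (Urange B2)"
  proof (rule ccontr)
    assume ne: "vec.dim (Urange B1) \<noteq> vec.dim (Urange B2)"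
    show False
    proof (cases "vec.dim (Urange B1) = 2")
      case True
      then have d2: "vec.dim (Urange B2) = 3" using ne rank23[OF S2] by simp
      have "Qp (conj_set g (Hs B1))" using Q_conj[OF g(1) Q_rank2[OF S1 True]] .
      then show False using g(2) notQ_rank3[OF S2 d2] by simp
    next
      case False
      then have d1: "vec.dim (Urange B1) = 3" using rank23[OF S1] by simp
      then have d2: "vec.dim (Urange B2) = 2" using ne rank23[OF S2] by simp
      have "Qp (conj_set (inv g) (Hs B2))" using Q_conj[OF GLV_inv[OF g(1)] Q_rank2[OF S2 d2]] .
      then have "Qp (Hs B1)" using conj_inv[OF g(1), of "Hs B1"] g(2) by simp
      then show False using notQ_rank3[OF S1 d1] by simp
    qed
  qed
next
  assume eq: "vec.dim (Urange B1) = vec.dim (Urange B2)"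
  have sub1: "vec.subspace W1" "vec.dim W1 + 3 = CARD('n)" using ss_sub[OF S1] ss_dim[OF S1] .
  have sub2: "vec.subspace W2" "vec.dim W2 + 3 = CARD('n)" using ss_sub[OF S2] ss_dim[OF S2] .
  obtain g where g: "g \<in> GLV" "\<forall>x y. g (B1 x y) = B2 (g x) (g y)"
  proof (cases "vec.dim (Urange B1) = 2")
    case True
    then have d2: "vec.dim (Urange B2) = 2" using eq by simp
    obtain e1 e2 e3 where e: "cb W1 e1 e2 e3" "B1 e1 e2 = 0" "B1 e1 e3 \<noteq> B1 e2 e3"
        "vec.independent {B1 e1 e3, B1 e2 e3}" using nf2[OF S1 True] by blast
    obtain f1 f2 f3 where f: "cb W2 f1 f2 f3" "B2 f1 f2 = 0" "B2 f1 f3 \<noteq> B2 f2 f3"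
        "vec.independent {B2 f1 f3, B2 f2 f3}" using nf2[OF S2 d2] by blast
    show ?thesis using iso2[OF S1 S2 e(1) f(1) e(2) e(3) e(4) f(2) f(3) f(4)] that by blast
  next
    case False
    then have d1: "vec.dim (Urange B1) = 3" using rank23[OF S1] by simp
    then have d2: "vec.dim (Urange B2) = 3" using eq by simp
    obtain e1 e2 e3 where e: "cb W1 e1 e2 e3" using exists_cb[OF sub1] by blast
    obtain f1 f2 f3 where f: "cb W2 f1 f2 f3" using exists_cb[OF sub2] by blast
    show ?thesis using iso3[OF S1 S2 d1 d2 e f] that by blast
  qed
  then show "\<exists>g\<in>GLV. conj_set g (Hs B1) = Hs B2" using conj_eq[OF g(1) g(2)] by blast
qed

lemma sstruct_T:
  assumes T: "alt_group T" and d: "vec.dim (weak_keys T) + 3 = CARD('n)"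
  shows "sstruct (Bf T) (weak_keys (T :: ('n::finite V \<Rightarrow> 'n V) set))"
  unfolding sstruct_def
proof (intro conjI allI)
  show "Bf T (x + y) z = Bf T x z + Bf T y z" for x y z using Bf_add1[OF T] .
  show "Bf T x y = Bf T y x" for x y using Bf_sym[OF T] .
  show "Bf T x x = 0" for x using Bf_self[OF T] .
  show "weak_keys T = {k. \<forall>x. Bf T x k = 0}" by (rule weak_keys_eq)
  show "Bf T x y \<in> weak_keys T" for x y unfolding weak_keys_eq using Bf_W[OF T] by blast
  show "vec.dim (weak_keys T) + 3 = CARD('n)" by (rule d)
qed

theorem corollary1:
  fixes T1 T2 :: "('n::finite V \<Rightarrow> 'n V) set"
  assumes "alt_group T1" and "alt_group T2"
    and "vec.dim (weak_keys T1) + 3 = CARD('n)"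
    and "vec.dim (weak_keys T2) + 3 = CARD('n)"
  shows "(\<exists>g \<in> GLV. conj_set g (H_alt T1) = H_alt T2) \<longleftrightarrow>
         vec.dim (error_space T1) = vec.dim (error_space T2)"
proof -
  have e: "error_space T = Urange (Bf T)" for T :: "('n V \<Rightarrow> 'n V) set"
    unfolding error_space_eq Urange_def ..
  show ?thesis
    unfolding H_alt_eq[OF assms(1)] H_alt_eq[OF assms(2)] e
    by (rule main_abs[OF sstruct_T[OF assms(1,3)] sstruct_T[OF assms(2,4)]])
qed

end
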